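(* Let $I$ be the two-sided ideal of $Y^{\mathrm{rtt}}_\hbar(\mathfrak{gl}_n)$ generated by $\{t^{(r)}_{11}\}_{r\geq 2}$. Then $$\operatorname{Ker}\big(\mathrm{ev}^{\mathrm{rtt}}\colon Y^{\mathrm{rtt}}_\hbar(\mathfrak{gl}_n)\to U(\mathfrak{gl}_n)\big)=I.$$
   Context: Let $\hbar$ be a formal variable and $n\geq 1$. Let $E_{ij}\in\operatorname{End}\mathbb{C}^n$ be the matrix units and $P=\sum_{i,j}E_{ij}\otimes E_{ji}$ the permutation operator; set $R(z)=1-\frac{\hbar}{z}P$. The RTT Yangian $Y^{\mathrm{rtt}}_\hbar(\mathfrak{gl}_n)$ is the associative $\mathbb{C}[\hbar]$-algebra generated by $\{t^{(r)}_{ij}\}_{1\leq i,j\leq n}^{r\geq 1}$ subject to $R(z-w)T_1(z)T_2(w)=T_2(w)T_1(z)R(z-w)$ (an equality of series in $z,w$ after multiplying both sides by $z-w$), where $T(z)=\sum_{i,j}t_{ij}(z)\otimes E_{ij}$, $t_{ij}(z)=\delta_{ij}+\hbar\sum_{r\geq1}t^{(r)}_{ij}z^{-r}$, $T_1(z)=T(z)\otimes 1$, $T_2(w)=1\otimes T(w)$. Equivalently, $(z-w)[t_{ij}(z),t_{kl}(w)]=\hbar\big(t_{kj}(z)t_{il}(w)-t_{kj}(w)t_{il}(z)\big)$ for all $i,j,k,l$. Let $U(\mathfrak{gl}_n)$ denote the universal enveloping algebra of $\mathfrak{gl}_n$ over $\mathbb{C}[\hbar]$ (with standard basis $E_{ij}$).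 The RTT evaluation homomorphism $\mathrm{ev}^{\mathrm{rtt}}\colon Y^{\mathrm{rtt}}_\hbar(\mathfrak{gl}_n)\twoheadrightarrow U(\mathfrak{gl}_n)$ is the (well-defined, surjective) $\mathbb{C}[\hbar]$-algebra homomorphism given by $t^{(r)}_{ij}\mapsto\delta_{r,1}E_{ij}$. *)

theory Defs
  imports "HOL-Library.Poly_Mapping" "HOL-Computational_Algebra.Polynomial"
begin

datatype 'v word = Word "'v list"

fun unword :: "'v word \<Rightarrow> 'v list" where "unword (Word xs) = xs"

instantiation word :: (type) monoid_add
begin
definition zero_word_def: "0 = Word []"
definition plus_word_def: "a + b = Word (unword a @ unword b)"
instance by standard (auto simp: zero_word_def plus_word_def; metis unword.simps word.exhaust)+
end

text \<open>The free associative C[hbar]-algebra on generators of type 'v: finitely supported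
  coefficient functions on words, with the convolution product.\<close>
type_synonym 'v falg = "'v word \<Rightarrow>\<^sub>0 complex poly"

definition fa_gen :: "'v \<Rightarrow> 'v falg" where
  "fa_gen v = Poly_Mapping.single (Word [v]) 1"

definition fa_const :: "complex poly \<Rightarrow> 'v falg" where
  "fa_const c = Poly_Mapping.single 0 c"

definition fa_hbar :: "'v falg" where
  "fa_hbar = fa_const [:0, 1:]"

definition fa_hom :: "('v \<Rightarrow> 'w falg) \<Rightarrow> 'v falg \<Rightarrow> 'w falg" where
  "fa_hom \<sigma> f = (\<Sum>w\<in>Poly_Mapping.keys f. fa_const (Poly_Mapping.lookup f w) * prod_list (map \<sigma> (unword w)))"

definition two_sided_ideal :: "'a::ring_1 set \<Rightarrow> bool" where
  "two_sided_ideal J \<longleftrightarrow> 0 \<in> J \<and> (\<forall>a\<in>J. \<forall>b\<in>J. a + b \<in> J) \<and> (\<forall>a\<in>J. - a \<in> J)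
     \<and> (\<forall>a\<in>J. \<forall>x. x * a \<in> J \<and> a * x \<in> J)"

definition ideal_gen :: "'a::ring_1 set \<Rightarrow> 'a set" where
  "ideal_gen S = \<Inter>{J. two_sided_ideal J \<and> S \<subseteq> J}"

text \<open>Indices 1..n are represented by a finite linearly ordered type 'n (n = CARD('n));
  the index 1 is its least element.  The generator (r, i, j) of the free algebra stands
  for t_ij^(r+1).\<close>

definition idx1 :: "'n::{finite,linorder}" where
  "idx1 = Min UNIV"

fun tt :: "nat \<Rightarrow> 'n \<Rightarrow> 'n \<Rightarrow> (nat \<times> 'n \<times> 'n) falg" where
  "tt 0 i j = 0"
| "tt (Suc r) i j = fa_gen (r, i, j)"

definition dlt :: "'n \<Rightarrow> 'n \<Rightarrow> 'v falg" where
  "dlt a b = (if a = b then 1 else 0)"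

definition comm :: "'a::ring \<Rightarrow> 'a \<Rightarrow> 'a" where
  "comm a b = a * b - b * a"

text \<open>Coefficient of z^(-r) w^(-s) (r, s \<ge> 0) of
  (z-w)[t_ij(z),t_kl(w)] - hbar (t_kj(z) t_il(w) - t_kj(w) t_il(z)), divided by hbar^2,
  with the convention t^(0) = 0 in the expressions below.\<close>
definition rtt_rel :: "nat \<Rightarrow> nat \<Rightarrow> 'n \<Rightarrow> 'n \<Rightarrow> 'n \<Rightarrow> 'n \<Rightarrow> (nat \<times> 'n \<times> 'n) falg" where
  "rtt_rel r s i j k l =
     comm (tt (Suc r) i j) (tt s k l) - comm (tt r i j) (tt (Suc s) k l)
     - ((if r = 0 then dlt k j * tt s i l - dlt i l * tt s k j else 0)
        + (if s = 0 then dlt i l * tt r k j - dlt k j * tt r i l else 0)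
        + fa_hbar * (tt r k j * tt s i l - tt s k j * tt r i l))"

definition rtt_rels :: "(nat \<times> 'n \<times> 'n) falg set" where
  "rtt_rels = {rtt_rel r s i j k l | r s i j k l. True}"

definition gl_rels :: "('n \<times> 'n) falg set" where
  "gl_rels = {comm (fa_gen (i, j)) (fa_gen (k, l))
               - (dlt j k * fa_gen (i, l) - dlt l i * fa_gen (k, j)) | i j k l. True}"

text \<open>The evaluation map on generators: t_ij^(r) \<mapsto> \<delta>_{r,1} E_ij.\<close>
definition ev_gen :: "nat \<times> 'n \<times> 'n \<Rightarrow> ('n \<times> 'n) falg" where
  "ev_gen g = (case g of (r, i, j) \<Rightarrow> if r = 0 then fa_gen (i, j) else 0)"

end

theory Submission
  imports Defs
begin

lemma pm_rep: "(f::'a \<Rightarrow>\<^sub>0 'b::comm_monoid_add) = (\<Sum>w\<in>Poly_Mapping.keys f. Poly_Mapping.single w (Poly_Mapping.lookup f w))"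
  by (rule poly_mapping_eqI) (simp add: lookup_sum lookup_single when_def in_keys_iff)

lemma fa_const_0[simp]: "fa_const 0 = 0" by (simp add: fa_const_def)
lemma fa_const_1[simp]: "fa_const 1 = 1" by (simp add: fa_const_def)
lemma fa_const_add: "fa_const (a + b) = fa_const a + fa_const b" by (simp add: fa_const_def single_add)
lemma fa_const_mult: "fa_const (a * b) = fa_const a * fa_const b" by (simp add: fa_const_def mult_single)

lemma fa_const_central: "fa_const c * (x::'v falg) = x * fa_const c"
proof -
  have "fa_const c * (\<Sum>w\<in>Poly_Mapping.keys x. Poly_Mapping.single w (Poly_Mapping.lookup x w))
     = (\<Sum>w\<in>Poly_Mapping.keys x. Poly_Mapping.single w (Poly_Mapping.lookup x w)) * fa_const c"
    unfolding sum_distrib_left sum_distrib_right fa_const_def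
  proof (rule sum.cong[OF refl])
    fix w
    have "Poly_Mapping.single (0::'v word) c * Poly_Mapping.single w (Poly_Mapping.lookup x w)
       = Poly_Mapping.single w (c * Poly_Mapping.lookup x w)" by (simp add: mult_single)
    also have "\<dots> = Poly_Mapping.single w (Poly_Mapping.lookup x w) * Poly_Mapping.single (0::'v word) c"
      by (simp add: mult_single mult.commute)
    finally show "Poly_Mapping.single (0::'v word) c * Poly_Mapping.single w (Poly_Mapping.lookup x w)
       = Poly_Mapping.single w (Poly_Mapping.lookup x w) * Poly_Mapping.single (0::'v word) c" .
  qed
  then show ?thesis using pm_rep[of x] by simp
qed

definition phi :: "('v \<Rightarrow> 'w falg) \<Rightarrow> 'v word \<Rightarrow> complex poly \<Rightarrow> 'w falg" where
  "phi \<sigma> w c = fa_const c * prod_list (map \<sigma> (unword w))"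

lemma fa_hom_S: assumes "finite S" "Poly_Mapping.keys f \<subseteq> S"
  shows "fa_hom \<sigma> f = (\<Sum>w\<in>S. phi \<sigma> w (Poly_Mapping.lookup f w))"
  unfolding fa_hom_def phi_def
  by (rule sum.mono_neutral_left) (use assms in \<open>auto simp: in_keys_iff\<close>)

lemma fa_hom_add: "fa_hom \<sigma> (f + g) = fa_hom \<sigma> f + fa_hom \<sigma> g"
proof -
  let ?S = "Poly_Mapping.keys f \<union> Poly_Mapping.keys g"
  have "fa_hom \<sigma> (f + g) = (\<Sum>w\<in>?S. phi \<sigma> w (Poly_Mapping.lookup (f+g) w))"
    by (rule fa_hom_S) (auto simp: keys_add)
  also have "\<dots> = (\<Sum>w\<in>?S. phi \<sigma> w (Poly_Mapping.lookup f w)) + (\<Sum>w\<in>?S. phi \<sigma> w (Poly_Mapping.lookup g w))"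
    by (simp add: lookup_add phi_def fa_const_add distrib_right sum.distrib)
  also have "\<dots> = fa_hom \<sigma> f + fa_hom \<sigma> g"
    using fa_hom_S[of ?S f \<sigma>] fa_hom_S[of ?S g \<sigma>] by simp
  finally show ?thesis .
qed

lemma fa_hom_0[simp]: "fa_hom \<sigma> 0 = 0" by (simp add: fa_hom_def)

lemma fa_hom_uminus: "fa_hom \<sigma> (- f) = - fa_hom \<sigma> f"
  using fa_hom_add[of \<sigma> f "-f"] by (simp add: eq_neg_iff_add_eq_0 add.commute)

lemma fa_hom_diff: "fa_hom \<sigma> (f - g) = fa_hom \<sigma> f - fa_hom \<sigma> g"
  using fa_hom_add[of \<sigma> f "-g"] by (simp add: fa_hom_uminus)

lemma fa_hom_sum: "fa_hom \<sigma> (\<Sum>i\<in>A. F i) = (\<Sum>i\<in>A. fa_hom \<sigma> (F i))"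
  by (induction A rule: infinite_finite_induct) (auto simp: fa_hom_add)

lemma fa_hom_single: "fa_hom \<sigma> (Poly_Mapping.single w c) = phi \<sigma> w c"
  by (subst fa_hom_S[of "{w}"]) auto

lemma unword_add: "unword (w + v) = unword w @ unword v"
  by (simp add: plus_word_def)

lemma phi_mult: "phi \<sigma> (w + v) (c * d) = phi \<sigma> w c * phi \<sigma> v d"
  unfolding phi_def unword_add fa_const_mult
proof -
  let ?A = "prod_list (map \<sigma> (unword w))" and ?B = "prod_list (map \<sigma> (unword v))"
  have "fa_const c * fa_const d * (?A * ?B) = fa_const c * (fa_const d * ?A) * ?B"
    by (simp add: mult.assoc)
  also have "\<dots> = fa_const c * (?A * fa_const d) * ?B" by (simp add: fa_const_central)
  also have "\<dots> = fa_const c * ?A * (fa_const d * ?B)" by (simp add: mult.assoc)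
  finally show "fa_const c * fa_const d * prod_list (map \<sigma> (unword w @ unword v)) = fa_const c * ?A * (fa_const d * ?B)"
    by simp
qed

lemma fa_hom_rep: "fa_hom \<sigma> f = (\<Sum>w\<in>Poly_Mapping.keys f. fa_hom \<sigma> (Poly_Mapping.single w (Poly_Mapping.lookup f w)))"
  by (simp only: fa_hom_single) (simp add: fa_hom_def phi_def)

lemma fa_hom_mult: "fa_hom \<sigma> (f * g) = fa_hom \<sigma> f * fa_hom \<sigma> g"
proof -
  have "f * g = (\<Sum>w\<in>Poly_Mapping.keys f. \<Sum>v\<in>Poly_Mapping.keys g.
      Poly_Mapping.single w (Poly_Mapping.lookup f w) * Poly_Mapping.single v (Poly_Mapping.lookup g v))"
    by (subst pm_rep[of f], subst pm_rep[of g]) (rule sum_product)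
  then have "fa_hom \<sigma> (f * g) = (\<Sum>w\<in>Poly_Mapping.keys f. \<Sum>v\<in>Poly_Mapping.keys g.
      fa_hom \<sigma> (Poly_Mapping.single w (Poly_Mapping.lookup f w)) * fa_hom \<sigma> (Poly_Mapping.single v (Poly_Mapping.lookup g v)))"
    by (simp add: fa_hom_sum mult_single fa_hom_single phi_mult)
  also have "\<dots> = fa_hom \<sigma> f * fa_hom \<sigma> g"
    by (subst (2) fa_hom_rep, subst (3) fa_hom_rep) (rule sum_product[symmetric])
  finally show ?thesis .
qed

lemma fa_hom_gen[simp]: "fa_hom \<sigma> (fa_gen v) = \<sigma> v"
  by (simp add: fa_gen_def fa_hom_single phi_def)

lemma fa_hom_const[simp]: "fa_hom \<sigma> (fa_const c) = fa_const c"
  by (simp add: fa_const_def fa_hom_single phi_def zero_word_def) 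

lemma fa_hom_1[simp]: "fa_hom \<sigma> 1 = 1"
  using fa_hom_const[of \<sigma> 1] by simp

lemma fa_hom_hbar[simp]: "fa_hom \<sigma> fa_hbar = fa_hbar"
  by (simp add: fa_hbar_def)

lemma fa_hom_dlt[simp]: "fa_hom \<sigma> (dlt a b) = dlt a b"
  by (simp add: dlt_def)

lemma prod_gen: "prod_list (map fa_gen xs) = Poly_Mapping.single (Word xs) 1"
proof (induction xs)
  case Nil then show ?case by (simp add: zero_word_def[symmetric])
next
  case (Cons x xs)
  then show ?case by (simp add: fa_gen_def mult_single plus_word_def)
qed

lemma fa_hom_id: "fa_hom fa_gen f = f"
proof -
  have "fa_hom fa_gen f = (\<Sum>w\<in>Poly_Mapping.keys f. Poly_Mapping.single w (Poly_Mapping.lookup f w))"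
    unfolding fa_hom_def
  proof (rule sum.cong[OF refl])
    fix w :: "'a word"
    show "fa_const (Poly_Mapping.lookup f w) * prod_list (map fa_gen (unword w)) = Poly_Mapping.single w (Poly_Mapping.lookup f w)"
      by (cases w) (simp add: prod_gen fa_const_def mult_single)
  qed
  then show ?thesis using pm_rep[of f] by simp
qed

lemma fa_hom_prod_list: "fa_hom \<sigma> (prod_list xs) = prod_list (map (fa_hom \<sigma>) xs)"
  by (induction xs) (auto simp: fa_hom_mult)

lemma fa_hom_comp: "fa_hom \<sigma> (fa_hom \<tau> f) = fa_hom (fa_hom \<sigma> \<circ> \<tau>) f"
  unfolding fa_hom_def[of \<tau>] fa_hom_def[of "fa_hom \<sigma> \<circ> \<tau>"]
  by (simp add: fa_hom_sum fa_hom_mult fa_hom_prod_list)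

section \<open>Ideals\<close>

lemma ideal_gen_ideal: "two_sided_ideal (ideal_gen S)"
  unfolding ideal_gen_def two_sided_ideal_def by auto

lemma ideal_gen_sub: "S \<subseteq> ideal_gen S"
  unfolding ideal_gen_def by auto

lemma ideal_gen_min: "two_sided_ideal J \<Longrightarrow> S \<subseteq> J \<Longrightarrow> ideal_gen S \<subseteq> J"
  unfolding ideal_gen_def by auto

lemma ideal_0: "two_sided_ideal J \<Longrightarrow> 0 \<in> J" unfolding two_sided_ideal_def by auto
lemma ideal_add: "two_sided_ideal J \<Longrightarrow> a \<in> J \<Longrightarrow> b \<in> J \<Longrightarrow> a + b \<in> J"
  unfolding two_sided_ideal_def by auto
lemma ideal_neg: "two_sided_ideal J \<Longrightarrow> a \<in> J \<Longrightarrow> - a \<in> J"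
  unfolding two_sided_ideal_def by auto
lemma ideal_diff: "two_sided_ideal J \<Longrightarrow> a \<in> J \<Longrightarrow> b \<in> J \<Longrightarrow> a - b \<in> J"
  using ideal_add[of J a "-b"] ideal_neg[of J b] by simp
lemma ideal_multl: "two_sided_ideal J \<Longrightarrow> a \<in> J \<Longrightarrow> x * a \<in> J"
  unfolding two_sided_ideal_def by auto
lemma ideal_multr: "two_sided_ideal J \<Longrightarrow> a \<in> J \<Longrightarrow> a * x \<in> J"
  unfolding two_sided_ideal_def by auto
lemma ideal_sum: "two_sided_ideal J \<Longrightarrow> (\<And>i. i \<in> A \<Longrightarrow> F i \<in> J) \<Longrightarrow> (\<Sum>i\<in>A. F i) \<in> J"
  by (induction A rule: infinite_finite_induct) (auto simp: ideal_0 ideal_add)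

lemma ideal_preimage: "two_sided_ideal J \<Longrightarrow> two_sided_ideal {x. fa_hom \<sigma> x \<in> J}"
  unfolding two_sided_ideal_def by (auto simp: fa_hom_add fa_hom_uminus fa_hom_mult)

lemma prod_list_diff:
  assumes J: "two_sided_ideal J" and h: "\<And>v. \<sigma> v - \<tau> v \<in> J"
  shows "prod_list (map \<sigma> xs) - prod_list (map \<tau> xs) \<in> J"
proof (induction xs)
  case Nil then show ?case using ideal_0[OF J] by simp
next
  case (Cons x xs)
  let ?A = "prod_list (map \<sigma> xs)" and ?B = "prod_list (map \<tau> xs)"
  have "\<sigma> x * ?A - \<tau> x * ?B = (\<sigma> x - \<tau> x) * ?A + \<tau> x * (?A - ?B)"
    by (simp add: algebra_simps)
  moreover have "(\<sigma> x - \<tau> x) * ?A + \<tau> x * (?A - ?B) \<in> J"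
    using J h Cons by (intro ideal_add ideal_multl ideal_multr) auto
  ultimately show ?case by simp
qed

lemma fa_hom_diff_ideal:
  assumes J: "two_sided_ideal J" and h: "\<And>v. \<sigma> v - \<tau> v \<in> J"
  shows "fa_hom \<sigma> f - fa_hom \<tau> f \<in> J"
proof -
  have "fa_hom \<sigma> f - fa_hom \<tau> f = (\<Sum>w\<in>Poly_Mapping.keys f. fa_const (Poly_Mapping.lookup f w) *
     (prod_list (map \<sigma> (unword w)) - prod_list (map \<tau> (unword w))))"
    unfolding fa_hom_def by (simp add: algebra_simps sum_subtractf)
  also have "\<dots> \<in> J"
    using J prod_list_diff[OF J h] by (intro ideal_sum ideal_multl) auto
  finally show ?thesis .
qed

lemma dlt_same[simp]: "dlt a a = 1" by (simp add: dlt_def)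
lemma dlt_sym: "dlt a b = dlt b a" by (simp add: dlt_def)

lemma ev_tt: "fa_hom ev_gen (tt r i j) = (if r = Suc 0 then fa_gen (i, j) else 0)"
  by (cases r) (auto simp: ev_gen_def)

lemma rel0:
  assumes "s \<noteq> 0"
  shows "rtt_rel 0 s i j k l = comm (tt (Suc 0) i j) (tt s k l) - (dlt k j * tt s i l - dlt i l * tt s k j)"
  using assms by (simp add: rtt_rel_def comm_def)

lemma comm_in: "two_sided_ideal J \<Longrightarrow> b \<in> J \<Longrightarrow> comm a b \<in> J"
  unfolding comm_def by (intro ideal_diff ideal_multl[of J b a] ideal_multr[of J b a]) auto

lemma key:
  fixes J :: "(nat \<times> ('n::{finite,linorder}) \<times> 'n) falg set"
  assumes J_def: "J = ideal_gen (rtt_rels \<union> {tt r idx1 idx1 | r. r \<ge> 2})"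
  assumes s: "s \<ge> 2"
  shows "tt s k l \<in> J"
proof -
  have JI: "two_sided_ideal J" unfolding J_def by (rule ideal_gen_ideal)
  have R: "rtt_rel r s' i j k' l' \<in> J" for r s' i j k' l'
  proof -
    have "rtt_rel r s' i j k' l' \<in> rtt_rels" unfolding rtt_rels_def by blast
    then show ?thesis using ideal_gen_sub unfolding J_def by blast
  qed
  have T: "tt s idx1 idx1 \<in> J"
  proof -
    have "tt s idx1 idx1 \<in> {tt r idx1 idx1 | r. r \<ge> 2}" using s by blast
    then have "tt s idx1 idx1 \<in> rtt_rels \<union> {tt r idx1 idx1 | r. r \<ge> 2}" by (rule UnI2)
    then show ?thesis unfolding J_def by (rule subsetD[OF ideal_gen_sub])
  qed
  have s0: "s \<noteq> 0" using s by simp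
  have A: "tt s k' idx1 \<in> J" for k'
  proof -
    let ?C = "comm (tt (Suc 0) k' idx1) (tt s idx1 idx1)" and ?D = "dlt k' idx1 * tt s idx1 idx1"
    have h: "?C - (tt s k' idx1 - ?D) \<in> J"
      using R[of 0 s k' idx1 idx1 idx1] unfolding rel0[OF s0] by simp
    have c: "?C + ?D \<in> J"
      by (intro ideal_add[OF JI] comm_in[OF JI T] ideal_multl[OF JI T])
    have "tt s k' idx1 = (?C + ?D) - (?C - (tt s k' idx1 - ?D))"
      by (simp add: algebra_simps)
    then show ?thesis using ideal_diff[OF JI c h] by simp
  qed
  let ?C = "comm (tt (Suc 0) idx1 l) (tt s k idx1)" and ?D = "dlt k l * tt s idx1 idx1"
  have h: "?C - (?D - tt s k l) \<in> J"
    using R[of 0 s idx1 l k idx1] unfolding rel0[OF s0] by simp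
  have c: "?C - ?D \<in> J"
    by (intro ideal_diff[OF JI] comm_in[OF JI A] ideal_multl[OF JI T])
  have "tt s k l = (?C - (?D - tt s k l)) - (?C - ?D)"
    by (simp add: algebra_simps)
  then show ?thesis using ideal_diff[OF JI h c] by simp
qed

theorem theorem2p15:
  fixes f :: "(nat \<times> ('n::{finite,linorder}) \<times> 'n) falg"
  shows "fa_hom ev_gen f \<in> ideal_gen (gl_rels :: ('n \<times> 'n) falg set)
         \<longleftrightarrow> f \<in> ideal_gen (rtt_rels \<union> {tt r idx1 idx1 | r. r \<ge> 2})"
proof
  let ?J = "ideal_gen (rtt_rels \<union> {tt r idx1 idx1 | r. r \<ge> 2}) :: (nat \<times> 'n \<times> 'n) falg set"
  let ?G = "ideal_gen (gl_rels :: ('n \<times> 'n) falg set)"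
  have JI: "two_sided_ideal ?J" by (rule ideal_gen_ideal)
  define \<sigma> :: "'n \<times> 'n \<Rightarrow> (nat \<times> 'n \<times> 'n) falg" where "\<sigma> = (\<lambda>(i, j). fa_gen (0, i, j))"
  assume H: "fa_hom ev_gen f \<in> ?G"
  have "gl_rels \<subseteq> {x. fa_hom \<sigma> x \<in> ?J}"
  proof
    fix x :: "('n \<times> 'n) falg" assume "x \<in> gl_rels"
    then obtain i j k l where x: "x = comm (fa_gen (i, j)) (fa_gen (k, l))
               - (dlt j k * fa_gen (i, l) - dlt l i * fa_gen (k, j))"
      unfolding gl_rels_def by blast
    have "fa_hom \<sigma> x = rtt_rel 0 (Suc 0) i j k l"
      unfolding x by (simp add: rel0 comm_def fa_hom_diff fa_hom_mult \<sigma>_def dlt_sym[of j k] dlt_sym[of l i])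
    moreover have "rtt_rel 0 (Suc 0) i j k l \<in> ?J"
    proof -
      have "rtt_rel 0 (Suc 0) i j k l \<in> rtt_rels" unfolding rtt_rels_def by blast
      then show ?thesis by (rule subsetD[OF ideal_gen_sub UnI1])
    qed
    ultimately show "x \<in> {x. fa_hom \<sigma> x \<in> ?J}" by simp
  qed
  then have "?G \<subseteq> {x. fa_hom \<sigma> x \<in> ?J}"
    by (intro ideal_gen_min ideal_preimage JI)
  from subsetD[OF this H] have a: "fa_hom \<sigma> (fa_hom ev_gen f) \<in> ?J" by simp
  have "fa_hom fa_gen f - fa_hom (fa_hom \<sigma> \<circ> ev_gen) f \<in> ?J"
  proof (rule fa_hom_diff_ideal[OF JI])
    fix v :: "nat \<times> 'n \<times> 'n"
    obtain r i j where v: "v = (r, i, j)" by (cases v) auto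
    show "fa_gen v - (fa_hom \<sigma> \<circ> ev_gen) v \<in> ?J"
    proof (cases r)
      case 0 then show ?thesis using ideal_0[OF JI] by (simp add: v ev_gen_def \<sigma>_def)
    next
      case (Suc r')
      have "tt (Suc (Suc r')) i j \<in> ?J" by (rule key) simp_all
      then show ?thesis by (simp add: v Suc ev_gen_def)
    qed
  qed
  then have "f - fa_hom \<sigma> (fa_hom ev_gen f) \<in> ?J" by (simp add: fa_hom_id fa_hom_comp)
  from ideal_add[OF JI this a] show "f \<in> ?J" by simp
next
  let ?J = "ideal_gen (rtt_rels \<union> {tt r idx1 idx1 | r. r \<ge> 2}) :: (nat \<times> 'n \<times> 'n) falg set"
  let ?G = "ideal_gen (gl_rels :: ('n \<times> 'n) falg set)"
  have GI: "two_sided_ideal ?G" by (rule ideal_gen_ideal)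
  have gl: "comm (fa_gen (i, j)) (fa_gen (k, l)) - (dlt j k * fa_gen (i, l) - dlt l i * fa_gen (k, j)) \<in> ?G" for i j k l
  proof -
    have "comm (fa_gen (i, j)) (fa_gen (k, l)) - (dlt j k * fa_gen (i, l) - dlt l i * fa_gen (k, j)) \<in> gl_rels"
      unfolding gl_rels_def by blast
    then show ?thesis by (rule subsetD[OF ideal_gen_sub])
  qed
  have "rtt_rels \<union> {tt r idx1 idx1 | r. r \<ge> 2} \<subseteq> {x. fa_hom ev_gen x \<in> ?G}"
  proof
    fix x :: "(nat \<times> 'n \<times> 'n) falg" assume "x \<in> rtt_rels \<union> {tt r idx1 idx1 | r. r \<ge> 2}"
    then consider (a) r s i j k l where "x = rtt_rel r s i j k l" | (b) r where "x = tt r idx1 idx1" "r \<ge> 2"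
      unfolding rtt_rels_def by blast
    then show "x \<in> {x. fa_hom ev_gen x \<in> ?G}"
    proof cases
      case b then show ?thesis using ideal_0[OF GI] by (simp add: ev_tt)
    next
      case (a r s i j k l)
      have e: "fa_hom ev_gen x = comm (fa_hom ev_gen (tt (Suc r) i j)) (fa_hom ev_gen (tt s k l))
         - comm (fa_hom ev_gen (tt r i j)) (fa_hom ev_gen (tt (Suc s) k l))
         - ((if r = 0 then dlt k j * fa_hom ev_gen (tt s i l) - dlt i l * fa_hom ev_gen (tt s k j) else 0)
            + (if s = 0 then dlt i l * fa_hom ev_gen (tt r k j) - dlt k j * fa_hom ev_gen (tt r i l) else 0)
            + fa_hbar * (fa_hom ev_gen (tt r k j) * fa_hom ev_gen (tt s i l)
                - fa_hom ev_gen (tt s k j) * fa_hom ev_gen (tt r i l)))"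
        unfolding a rtt_rel_def comm_def by (simp add: fa_hom_diff fa_hom_add fa_hom_mult)
      show ?thesis
      proof (cases "r = 0")
        case True
        show ?thesis
        proof (cases "s = Suc 0")
          case True
          have "fa_hom ev_gen x = comm (fa_gen (i, j)) (fa_gen (k, l)) - (dlt j k * fa_gen (i, l) - dlt l i * fa_gen (k, j))"
            using e[unfolded ev_tt] True \<open>r = 0\<close> by (simp add: comm_def dlt_sym[of j k] dlt_sym[of l i])
          then show ?thesis using gl[of i j k l] by simp
        next
          case False
          have "fa_hom ev_gen x = 0"
            using e[unfolded ev_tt] False \<open>r = 0\<close> by (simp add: comm_def)
          then show ?thesis using ideal_0[OF GI] by simp
        qed
      next
        case False
        show ?thesis
        proof (cases "r = Suc 0 \<and> s = 0")
          case True
          have "fa_hom ev_gen x = - (comm (fa_gen (i, j)) (fa_gen (k, l)) - (dlt j k * fa_gen (i, l) - dlt l i * fa_gen (k, j)))"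
            using e[unfolded ev_tt] True by (simp add: dlt_sym[of j k] dlt_sym[of l i] comm_def algebra_simps)
          then show ?thesis using ideal_neg[OF GI gl[of i j k l]] by simp
        next
          case False
          have "fa_hom ev_gen x = 0"
            using e[unfolded ev_tt] False \<open>r \<noteq> 0\<close> by (cases "r = Suc 0") (simp_all add: comm_def)
          then show ?thesis using ideal_0[OF GI] by simp
        qed
      qed
    qed
  qed
  then have "?J \<subseteq> {x. fa_hom ev_gen x \<in> ?G}"
    by (intro ideal_gen_min ideal_preimage GI)
  moreover assume "f \<in> ?J"
  ultimately show "fa_hom ev_gen f \<in> ?G" by (metis (no_types, lifting) mem_Collect_eq subsetD)
qed

end
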